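(* Let $k$ be an odd positive integer. Then $$\sum_{n=1}^{k-1}\frac{\cos^2(\pi n/k)}{\sin^4(2\pi n/k)}=\frac{1}{720}\left(k^4+70k^2-71\right).$$ *)

theory Defs
  imports "HOL-Analysis.Analysis"
begin

end

theory Submission
  imports Defs
begin

lemma cis_ne1:
  assumes "t \<noteq> 0" "\<bar>t\<bar> < 2*pi"
  shows "cis t \<noteq> 1"
proof
  assume "cis t = 1"
  hence "exp (\<i> * complex_of_real t) = 1" by (simp add: cis_conv_exp)
  then obtain m :: int where m: "t = real_of_int (2*m) * pi" by (auto simp: exp_eq_1)
  have "m \<noteq> 0" using assms(1) m by auto
  hence "\<bar>real_of_int m\<bar> \<ge> 1" by linarith
  hence "\<bar>t\<bar> \<ge> 2*pi" using m pi_gt_zero by (simp add: abs_mult)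
  thus False using assms(2) by simp
qed

lemma geom_zero:
  fixes z :: complex
  assumes "z ^ k = 1" "z \<noteq> 1"
  shows "(\<Sum>j<k. z ^ j) = 0"
  using assms by (simp add: sum_gp_strict)

lemma unity_sum:
  fixes d :: int
  assumes "k > 0" "d \<noteq> 0" "\<bar>d\<bar> < int k"
  shows "(\<Sum>n<k. cis (2*pi*real n* of_int d/real k)) = 0"
proof -
  define z where "z = cis (2*pi* of_int d/real k)"
  have eq: "cis (2*pi*real n* of_int d/real k) = z ^ n" for n
    unfolding z_def Complex.DeMoivre by (simp add: mult_ac)
  have "z ^ k = cis (2*pi* of_int d)" using assms(1) unfolding z_def Complex.DeMoivre by simp
  also have "\<dots> = 1" by (rule cis_multiple_2pi) simp
  finally have zk: "z ^ k = 1" .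
  have "\<bar>2*pi* of_int d/real k\<bar> < 2*pi"
  proof -
    have "\<bar>real_of_int d\<bar> < real k" using assms(3) by linarith
    hence "\<bar>real_of_int d\<bar> / real k < 1" using assms(1) by simp
    hence "2 * pi * (\<bar>real_of_int d\<bar> / real k) < 2 * pi * 1" using pi_gt_zero by (intro mult_strict_left_mono) auto
    thus ?thesis using pi_gt_zero by (simp add: abs_mult abs_divide)
  qed
  moreover have "2*pi* of_int d/real k \<noteq> 0" using assms by simp
  ultimately have "z \<noteq> 1" unfolding z_def by (intro cis_ne1)
  thus ?thesis using zk by (simp add: eq geom_zero)
qed

definition w :: "nat \<Rightarrow> nat \<Rightarrow> complex" where "w k n = cis (2*pi*real n/real k)"
definition S :: "nat \<Rightarrow> (nat \<Rightarrow> real) \<Rightarrow> complex \<Rightarrow> complex" where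
  "S k a z = (\<Sum>j<k. complex_of_real (a j) * z ^ j)"

lemma w_pow: "k > 0 \<Longrightarrow> w k n ^ k = 1"
  unfolding w_def Complex.DeMoivre by (simp add: cis_multiple_2pi)

lemma w_ne1: "0 < n \<Longrightarrow> n < k \<Longrightarrow> w k n \<noteq> 1"
  unfolding w_def
proof (rule cis_ne1)
  assume "0 < n" "n < k"
  thus "2 * pi * real n / real k \<noteq> 0" by simp
  have "real n / real k < 1" using \<open>n<k\<close> \<open>0<n\<close> by simp
  hence "2 * pi * (real n / real k) < 2 * pi * 1" using pi_gt_zero by (intro mult_strict_left_mono) auto
  thus "\<bar>2 * pi * real n / real k\<bar> < 2 * pi" using pi_gt_zero by (simp add: abs_mult)
qed

lemma parseval:
  assumes "k > 0"
  shows "(\<Sum>n<k. cmod (S k a (w k n)) ^ 2) = real k * (\<Sum>j<k. (a j)^2)"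
proof -
  have pw: "w k n ^ j * cnj (w k n) ^ l = cis (2*pi*real n* of_int (int j - int l)/real k)" for n j l
    unfolding w_def cis_cnj Complex.DeMoivre cis_mult by (simp add: diff_divide_distrib algebra_simps)
  have "complex_of_real (\<Sum>n<k. cmod (S k a (w k n)) ^ 2) = (\<Sum>n<k. S k a (w k n) * cnj (S k a (w k n)))"
    by (simp only: of_real_sum complex_norm_square)
  also have "\<dots> = (\<Sum>n<k. \<Sum>j<k. \<Sum>l<k. complex_of_real (a j * a l) * cis (2*pi*real n* of_int (int j - int l)/real k))"
  proof (rule sum.cong, simp)
    fix n
    have "S k a z * cnj (S k a z) = (\<Sum>j<k. \<Sum>l<k. complex_of_real (a j * a l) * (z^j * cnj z^l))" for z
      unfolding S_def sum_distrib_right cnj_sum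
      by (rule sum.cong, simp, simp add: sum_distrib_left mult_ac)
    thus "S k a (w k n) * cnj (S k a (w k n)) = (\<Sum>j<k. \<Sum>l<k. complex_of_real (a j * a l) * cis (2*pi*real n* of_int (int j - int l)/real k))"
      by (simp only: pw)
  qed
  also have "\<dots> = (\<Sum>j<k. \<Sum>l<k. complex_of_real (a j * a l) * (\<Sum>n<k. cis (2*pi*real n* of_int (int j - int l)/real k)))"
    by (simp add: sum_distrib_left) (subst sum.swap, rule sum.cong, simp, subst sum.swap, simp)
  also have "\<dots> = (\<Sum>j<k. complex_of_real (a j * a j) * of_nat k)"
  proof (rule sum.cong, simp)
    fix j assume j: "j \<in> {..<k}"
    have "(\<Sum>l<k. complex_of_real (a j * a l) * (\<Sum>n<k. cis (2*pi*real n* of_int (int j - int l)/real k)))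
        = (\<Sum>l\<in>{j}. complex_of_real (a j * a l) * (\<Sum>n<k. cis (2*pi*real n* of_int (int j - int l)/real k)))"
    proof (rule sum.mono_neutral_right)
      show "\<forall>i\<in>{..<k} - {j}. complex_of_real (a j * a i) * (\<Sum>n<k. cis (2*pi*real n* of_int (int j - int i)/real k)) = 0"
      proof
        fix i assume i: "i \<in> {..<k} - {j}"
        have "(\<Sum>n<k. cis (2*pi*real n* of_int (int j - int i)/real k)) = 0"
          by (rule unity_sum) (use assms j i in auto)
        thus "complex_of_real (a j * a i) * (\<Sum>n<k. cis (2*pi*real n* of_int (int j - int i)/real k)) = 0" by simp
      qed
    qed (use j in auto)
    thus "(\<Sum>l<k. complex_of_real (a j * a l) * (\<Sum>n<k. cis (2*pi*real n* of_int (int j - int l)/real k)))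
        = complex_of_real (a j * a j) * of_nat k" by simp
  qed
  also have "\<dots> = complex_of_real (real k * (\<Sum>j<k. (a j)^2))"
    by (simp add: sum_distrib_left power2_eq_square mult_ac)
  finally show ?thesis by (simp only: of_real_eq_iff)
qed

lemma telescope:
  fixes f :: "real \<Rightarrow> real" and z :: complex
  shows "(1 - z) * (\<Sum>j<m. complex_of_real (f (real j)) * z^j)
    = (\<Sum>j<m. complex_of_real (f (real j) - f (real j - 1)) * z^j) + complex_of_real (f (-1))
      - complex_of_real (f (real m - 1)) * z^m"
  by (induction m) (simp_all add: algebra_simps)

lemma geom2:
  fixes x :: complex
  shows "(1 - x) * (\<Sum>j<m. x^j) = 1 - x^m"
  by (simp add: one_diff_power_eq)

lemma cmod_1m: "cmod (1 - cis t)^2 = 4 * sin (t/2)^2"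
proof -
  have h1: "cos t = 1 - 2 * (sin (t/2))^2" using cos_double_sin[of "t/2"] by simp
  have h2: "sin t ^2 + cos t ^2 = 1" by simp
  have "cmod (1 - cis t)^2 = (1 - cos t)^2 + sin t ^ 2" by (simp add: cmod_power2)
  also have "\<dots> = 2 - 2 * cos t" using h2 by (simp add: power2_eq_square algebra_simps)
  finally show ?thesis using h1 by simp
qed

lemma cmod_1p: "cmod (1 + cis t)^2 = 4 * cos (t/2)^2"
proof -
  have h1: "cos t = 2*cos(t/2)^2 - 1" using cos_double_cos[of "t/2"] by simp
  have h2: "sin t ^2 + cos t ^2 = 1" by simp
  have "cmod (1 + cis t)^2 = (1 + cos t)^2 + sin t ^ 2" by (simp add: cmod_power2)
  also have "\<dots> = 2 + 2 * cos t" using h2 by (simp add: power2_eq_square algebra_simps)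
  finally show ?thesis using h1 by simp
qed

definition a1 :: "nat \<Rightarrow> real" where "a1 j = real j"
definition a2 :: "nat \<Rightarrow> nat \<Rightarrow> real" where "a2 k j = real j * (real j - real k + 2)"
definition a3 :: "nat \<Rightarrow> real" where "a3 j = (-1)^j"

lemma sumw0: "0 < n \<Longrightarrow> n < k \<Longrightarrow> (\<Sum>j<k. w k n ^ j) = 0"
  by (rule geom_zero) (auto simp: w_pow w_ne1)

lemma app1:
  assumes "0 < n" "n < k"
  shows "(1 - w k n) * S k a1 (w k n) = - of_nat k"
proof -
  have "(1 - w k n) * S k a1 (w k n) = (\<Sum>j<k. complex_of_real (1) * (w k n)^j) + complex_of_real (-1)
      - complex_of_real (real k - 1) * (w k n)^k"
    using telescope[where f="\<lambda>x. x" and z="w k n" and m=k] by (simp add: S_def a1_def)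
  also have "\<dots> = - of_nat k" using sumw0[OF assms] w_pow[of k n] assms by simp
  finally show ?thesis .
qed

lemma app2:
  assumes "0 < n" "n < k"
  shows "(1 - w k n) * S k (a2 k) (w k n) = 2 * S k a1 (w k n)"
proof -
  let ?f = "\<lambda>x::real. x * (x - real k + 2)"
  have "(1 - w k n) * S k (a2 k) (w k n) = (\<Sum>j<k. complex_of_real (?f (real j) - ?f (real j - 1)) * (w k n)^j) + complex_of_real (?f (-1))
      - complex_of_real (?f (real k - 1)) * (w k n)^k"
    using telescope[where f="\<lambda>x::real. x * (x - real k + 2)" and z="w k n" and m=k] by (simp add: S_def a2_def)
  also have "\<dots> = (\<Sum>j<k. (2 * complex_of_real (real j) + complex_of_real (1 - real k)) * (w k n)^j)"
    using w_pow[of k n] assms by (simp add: algebra_simps)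
  also have "\<dots> = 2 * (\<Sum>j<k. complex_of_real (real j) * (w k n)^j) + complex_of_real (1 - real k) * (\<Sum>j<k. (w k n)^j)"
    unfolding sum_distrib_left sum.distrib[symmetric] by (rule sum.cong) (simp_all add: algebra_simps)
  also have "\<dots> = 2 * S k a1 (w k n)" using sumw0[OF assms] by (simp add: S_def a1_def)
  finally show ?thesis .
qed

lemma app3:
  assumes "odd k"
  shows "(1 + w k n) * S k a3 (w k n) = 2"
proof -
  have "k > 0" using assms by (cases k) auto
  have "(1 + w k n) * S k a3 (w k n) = (1 - (- w k n)) * (\<Sum>j<k. (- w k n)^j)"
    by (simp add: S_def a3_def power_minus[of "w k n"])
  also have "\<dots> = 1 - (- w k n)^k" by (rule geom2)
  also have "\<dots> = 2" using assms w_pow[OF \<open>k>0\<close>, of n] by (simp add: power_minus_odd)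
  finally show ?thesis .
qed


lemma norm_sq_from:
  assumes "(1 - z) * X = c" "z \<noteq> 1"
  shows "cmod X ^2 = cmod c ^2 / cmod (1 - z)^2"
proof -
  have "X = c / (1 - z)" using assms by (simp add: field_simps)
  thus ?thesis by (simp add: norm_divide power_divide)
qed

lemma pern:
  assumes "odd k" "0 < n" "n < k"
  defines "x \<equiv> pi * real n / real k"
  shows "sin x \<noteq> 0" "cos x \<noteq> 0"
    "1 / sin x ^ 2 = 4 / real k ^ 2 * cmod (S k a1 (w k n))^2"
    "1 / sin x ^ 4 = 4 / real k ^ 2 * cmod (S k (a2 k) (w k n))^2"
    "1 / cos x ^ 2 = cmod (S k a3 (w k n))^2"
proof -
  have wx: "w k n = cis (2 * x)" by (simp add: w_def x_def mult.assoc)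
  have m1: "cmod (1 - w k n)^2 = 4 * sin x ^ 2" using cmod_1m[of "2*x"] by (simp add: wx)
  have p1: "cmod (1 + w k n)^2 = 4 * cos x ^ 2" using cmod_1p[of "2*x"] by (simp add: wx)
  have "0 < x" using assms by (simp add: x_def)
  moreover have "x < pi"
  proof -
    have "real n / real k < 1" using assms by simp
    hence "pi * (real n / real k) < pi * 1" using pi_gt_zero by (intro mult_strict_left_mono) auto
    thus ?thesis by (simp add: x_def)
  qed
  ultimately have sp: "sin x > 0" by (rule sin_gt_zero)
  thus "sin x \<noteq> 0" by simp
  have a3e: "(1 + w k n) * S k a3 (w k n) = 2" using app3[OF assms(1)] .
  hence "1 + w k n \<noteq> 0" by auto
  hence "cmod (1 + w k n)^2 \<noteq> 0" by simp
  hence cn: "cos x \<noteq> 0" using p1 by simp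
  thus "cos x \<noteq> 0" .
  have wn1: "w k n \<noteq> 1" using w_ne1 assms by simp
  have q1: "cmod (S k a1 (w k n))^2 = real k ^2 / (4 * sin x ^ 2)"
    using norm_sq_from[OF app1[OF assms(2,3)] wn1] m1 by simp
  thus "1 / sin x ^ 2 = 4 / real k ^ 2 * cmod (S k a1 (w k n))^2"
    using assms sp by (simp add: field_simps)
  have "(1 - w k n) * ((1 - w k n) * S k (a2 k) (w k n)) = - 2 * of_nat k"
  proof -
    have "(1 - w k n) * ((1 - w k n) * S k (a2 k) (w k n)) = 2 * ((1 - w k n) * S k a1 (w k n))"
      unfolding app2[OF assms(2,3)] by (simp add: mult.left_commute)
    thus ?thesis unfolding app1[OF assms(2,3)] by simp
  qed
  hence "(1 - w k n) * S k (a2 k) (w k n) = (- 2 * of_nat k) / (1 - w k n)" using wn1 by (simp add: field_simps)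
  hence "cmod (S k (a2 k) (w k n))^2 = cmod ((- 2 * of_nat k) / (1 - w k n))^2 / cmod (1 - w k n)^2"
    using norm_sq_from wn1 by blast
  also have "\<dots> = 4 * real k^2 / (cmod (1 - w k n)^2)^2"
    by (simp add: norm_divide power_divide norm_mult power_mult_distrib)
  also have "\<dots> = real k^2 / (4 * sin x ^ 4)" using m1 by (simp add: power_mult_distrib)
  finally show "1 / sin x ^ 4 = 4 / real k ^ 2 * cmod (S k (a2 k) (w k n))^2"
    using assms sp by (simp add: field_simps)
  have "cmod (S k a3 (w k n))^2 = 4 / cmod (1 + w k n)^2"
  proof -
    have "S k a3 (w k n) = 2 / (1 + w k n)" using a3e \<open>1 + w k n \<noteq> 0\<close> by (simp add: field_simps)
    thus ?thesis by (simp add: norm_divide power_divide)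
  qed
  thus "1 / cos x ^ 2 = cmod (S k a3 (w k n))^2" using p1 cn by simp
qed

lemma sum_rest:
  assumes "k > 0"
  shows "(\<Sum>n=1..k-1. cmod (S k a (w k n))^2) = real k * (\<Sum>j<k. (a j)^2) - (\<Sum>j<k. a j)^2"
proof -
  have e: "{..<k} = insert 0 {1..k-1}" using assms by auto
  have "(\<Sum>n<k. cmod (S k a (w k n))^2) = cmod (S k a (w k 0))^2 + (\<Sum>n=1..k-1. cmod (S k a (w k n))^2)"
    unfolding e by (subst sum.insert) auto
  moreover have "S k a (w k 0) = of_real (\<Sum>j<k. a j)" by (simp add: S_def w_def of_real_sum)
  hence "cmod (S k a (w k 0))^2 = (\<Sum>j<k. a j)^2" by (simp only: norm_of_real power2_abs)
  ultimately show ?thesis using parseval[OF assms, of a] by simp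
qed

lemma ps1: "(\<Sum>j<m. real j) = real m * (real m - 1) / 2"
  by (induction m) (simp_all add: field_simps)
lemma ps2: "(\<Sum>j<m. real j ^ 2) = real m * (real m - 1) * (2 * real m - 1) / 6"
  by (induction m) (simp_all add: field_simps power2_eq_square)
lemma ps3: "(\<Sum>j<m. real j ^ 3) = (real m * (real m - 1) / 2) ^ 2"
  by (induction m) (simp_all add: field_simps power2_eq_square power3_eq_cube)
lemma ps4: "(\<Sum>j<m. real j ^ 4) = real m * (real m - 1) * (2 * real m - 1) * (3 * real m ^ 2 - 3 * real m - 1) / 30"
  by (induction m) (simp_all add: field_simps power2_eq_square power3_eq_cube power4_eq_xxxx)

lemma alt_sum: "(\<Sum>j<m. a3 j) = (if even m then 0 else 1)"
  by (induction m) (auto simp: a3_def)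


lemma term_eq:
  assumes "odd k" "0 < n" "n < k"
  shows "cos (pi * real n / real k) ^ 2 / sin (2 * pi * real n / real k) ^ 4
    = (4 / real k ^ 2 * cmod (S k (a2 k) (w k n))^2 + 4 / real k ^ 2 * cmod (S k a1 (w k n))^2
       + cmod (S k a3 (w k n))^2) / 16"
proof -
  define x where "x = pi * real n / real k"
  have s0: "sin x \<noteq> 0" and c0: "cos x \<noteq> 0" using pern(1,2)[OF assms] by (simp_all add: x_def)
  have sd: "sin (2 * pi * real n / real k) = 2 * sin x * cos x"
    using sin_double[of x] by (simp add: x_def mult.assoc)
  have sc: "sin x ^ 2 + cos x ^ 2 = 1" by simp
  have key: "cos x ^ 2 / (2 * sin x * cos x) ^ 4 = (1 / sin x ^ 4 + 1 / sin x ^ 2 + 1 / cos x ^ 2) / 16"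
  proof -
    have "cos x ^ 2 + sin x ^ 2 * cos x ^ 2 + sin x ^ 4 = 1"
    proof -
      have "sin x ^ 2 * cos x ^ 2 + sin x ^ 4 = sin x ^ 2 * (sin x ^ 2 + cos x ^ 2)"
        by algebra
      also have "\<dots> = sin x ^ 2" using sc by simp
      finally have "sin x ^ 2 * cos x ^ 2 + sin x ^ 4 = sin x ^ 2" .
      thus ?thesis using sc by linarith
    qed
    thus ?thesis using s0 c0 by (simp add: field_simps power2_eq_square power4_eq_xxxx)
  qed
  have "cos (pi * real n / real k) ^ 2 / sin (2 * pi * real n / real k) ^ 4 = cos x ^ 2 / (2 * sin x * cos x) ^ 4"
    by (simp only: sd x_def)
  also have "\<dots> = (1 / sin x ^ 4 + 1 / sin x ^ 2 + 1 / cos x ^ 2) / 16" by (rule key)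
  also have "\<dots> = (4 / real k ^ 2 * cmod (S k (a2 k) (w k n))^2 + 4 / real k ^ 2 * cmod (S k a1 (w k n))^2
       + cmod (S k a3 (w k n))^2) / 16"
    unfolding x_def pern(3,4,5)[OF assms] ..
  finally show ?thesis .
qed

theorem mainTheorem6:
  fixes k :: nat
  assumes "odd k" and "k > 0"
  shows "(\<Sum>n = 1..k - 1. cos (pi * real n / real k) ^ 2 / sin (2 * pi * real n / real k) ^ 4)
         = (real k ^ 4 + 70 * real k ^ 2 - 71) / 720"
proof -
  let ?Q = "\<lambda>a n. cmod (S k a (w k n))^2"
  have "(\<Sum>n = 1..k - 1. cos (pi * real n / real k) ^ 2 / sin (2 * pi * real n / real k) ^ 4)
      = (\<Sum>n = 1..k - 1. (4 / real k ^ 2 * ?Q (a2 k) n + 4 / real k ^ 2 * ?Q a1 n + ?Q a3 n) / 16)"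
  proof (rule sum.cong)
    fix n assume "n \<in> {1..k-1}"
    thus "cos (pi * real n / real k) ^ 2 / sin (2 * pi * real n / real k) ^ 4
      = (4 / real k ^ 2 * ?Q (a2 k) n + 4 / real k ^ 2 * ?Q a1 n + ?Q a3 n) / 16"
      by (intro term_eq) (use assms in auto)
  qed simp
  also have "\<dots> = (4 / real k ^ 2 * (\<Sum>n = 1..k - 1. ?Q (a2 k) n) + 4 / real k ^ 2 * (\<Sum>n = 1..k - 1. ?Q a1 n)
       + (\<Sum>n = 1..k - 1. ?Q a3 n)) / 16"
    by (simp only: sum_divide_distrib[symmetric] sum.distrib sum_distrib_left)
  also have "\<dots> = (4 / real k ^ 2 * (real k * (\<Sum>j<k. (a2 k j)^2) - (\<Sum>j<k. a2 k j)^2)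
       + 4 / real k ^ 2 * (real k * (\<Sum>j<k. (a1 j)^2) - (\<Sum>j<k. a1 j)^2)
       + (real k * (\<Sum>j<k. (a3 j)^2) - (\<Sum>j<k. a3 j)^2)) / 16"
    using assms by (simp only: sum_rest)
  also have "\<dots> = (real k ^ 4 + 70 * real k ^ 2 - 71) / 720"
  proof -
    have A2: "(\<Sum>j<k. (a2 k j)^2) = (\<Sum>j<k. real j ^ 4) - 2 * (real k - 2) * (\<Sum>j<k. real j ^ 3)
        + (real k - 2)^2 * (\<Sum>j<k. real j ^ 2)"
    proof -
      have "(a2 k j)^2 = real j ^ 4 - 2 * (real k - 2) * real j ^ 3 + (real k - 2)^2 * real j ^ 2" for j
        by (simp add: a2_def power2_eq_square power3_eq_cube power4_eq_xxxx algebra_simps)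
      thus ?thesis by (simp add: sum.distrib sum_subtractf sum_distrib_left)
    qed
    have B2: "(\<Sum>j<k. a2 k j) = (\<Sum>j<k. real j ^ 2) - (real k - 2) * (\<Sum>j<k. real j)"
    proof -
      have "a2 k j = real j ^ 2 - (real k - 2) * real j" for j
        by (simp add: a2_def power2_eq_square algebra_simps)
      thus ?thesis by (simp add: sum_subtractf sum_distrib_left)
    qed
    have A1: "(\<Sum>j<k. (a1 j)^2) = (\<Sum>j<k. real j ^ 2)" by (simp add: a1_def)
    have B1: "(\<Sum>j<k. a1 j) = (\<Sum>j<k. real j)" by (simp add: a1_def)
    have A3: "(\<Sum>j<k. (a3 j)^2) = real k" by (simp add: a3_def power2_eq_square flip: power_add)
    have B3: "(\<Sum>j<k. a3 j) = 1" using assms by (simp add: alt_sum)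
    have kp: "real k > 0" using assms by simp
    show ?thesis unfolding A2 B2 A1 B1 A3 B3 ps1 ps2 ps3 ps4 using kp
      by (simp add: field_simps) algebra
  qed
  finally show ?thesis .
qed

end
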